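(* Let $X$ be a Baire space, $Y$ a topological space, $(Z,d)$ a metric space and $f:X\times Y\to Z$ a mapping. Suppose $f^y$ is quasicontinuous for every $y\in Y$, and there is a dense set $D\subset Y$ such that for every $y\in D$: (i) there is a dense Baire subspace $Q_y$ of $X$ such that $f_x$ is cliquish at $y$ for every $x\in Q_y$, and (ii) some neighborhood of $y$ in $Y$ has a countable pseudobase. Then $f$ is cliquish (at every point of $X\times Y$).
   Context: $f_x(y)=f^y(x)=f(x,y)$. A mapping $g$ is quasicontinuous at $a$ if for each neighborhood $U$ of $a$ and neighborhood $W$ of $g(a)$ there is an open $O$ with $\emptyset\ne O\subset U$ and $g(O)\subset W$; quasicontinuous means at every point. A mapping $g$ from a space $T$ into $(Z,d)$ is cliquish at $t$ if for each $\varepsilon>0$ and each neighborhood $U$ of $t$ there is an open $O$ with $\emptyset\ne O\subset U$ and $\mathrm{diam}(g(O))\le\varepsilon$; cliquish means at every point (for $f$, with $T=X\times Y$ with the product topology). A pseudobase of a space is a collection of nonempty open sets such that every nonempty open set contains one of them. *)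

theory Defs
  imports "HOL-Analysis.Analysis"
begin

definition Baire_space :: "'a topology \<Rightarrow> bool" where
  "Baire_space T \<longleftrightarrow>
     (\<forall>\<G>. countable \<G> \<and> (\<forall>G\<in>\<G>. openin T G \<and> T closure_of G = topspace T)
        \<longrightarrow> T closure_of (topspace T \<inter> \<Inter>\<G>) = topspace T)"

definition quasicontinuous_at :: "'a topology \<Rightarrow> ('a \<Rightarrow> 'c::topological_space) \<Rightarrow> 'a \<Rightarrow> bool" where
  "quasicontinuous_at T g a \<longleftrightarrow>
     (\<forall>U W. openin T U \<and> a \<in> U \<and> open W \<and> g a \<in> W \<longrightarrow>
        (\<exists>V. openin T V \<and> V \<noteq> {} \<and> V \<subseteq> U \<and> g ` V \<subseteq> W))"

definition quasicontinuous :: "'a topology \<Rightarrow> ('a \<Rightarrow> 'c::topological_space) \<Rightarrow> bool" where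
  "quasicontinuous T g \<longleftrightarrow> (\<forall>a\<in>topspace T. quasicontinuous_at T g a)"

text \<open>Cliquishness; diam(g(O)) \<le> e is written out as a bound on all pairwise distances.\<close>
definition cliquish_at :: "'a topology \<Rightarrow> ('a \<Rightarrow> 'c::metric_space) \<Rightarrow> 'a \<Rightarrow> bool" where
  "cliquish_at T g t \<longleftrightarrow>
     (\<forall>e>0. \<forall>U. openin T U \<and> t \<in> U \<longrightarrow>
        (\<exists>V. openin T V \<and> V \<noteq> {} \<and> V \<subseteq> U \<and> (\<forall>u\<in>V. \<forall>v\<in>V. dist (g u) (g v) \<le> e)))"

definition cliquish :: "'a topology \<Rightarrow> ('a \<Rightarrow> 'c::metric_space) \<Rightarrow> bool" where
  "cliquish T g \<longleftrightarrow> (\<forall>t\<in>topspace T. cliquish_at T g t)"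

definition pseudobase :: "'a topology \<Rightarrow> 'a set set \<Rightarrow> bool" where
  "pseudobase T \<B> \<longleftrightarrow> (\<forall>B\<in>\<B>. openin T B \<and> B \<noteq> {}) \<and>
     (\<forall>U. openin T U \<and> U \<noteq> {} \<longrightarrow> (\<exists>B\<in>\<B>. B \<subseteq> U))"

end

theory Submission
  imports Defs
begin

lemma baire_aux:
  assumes B: "Baire_space T" and c: "countable \<A>" and o: "openin T S0" "S0 \<noteq> {}" and cov: "S0 \<subseteq> \<Union>\<A>"
  shows "\<exists>A\<in>\<A>. T interior_of (T closure_of A) \<inter> S0 \<noteq> {}"
proof (rule ccontr)
  assume H: "\<not> ?thesis"
  define G where "G = (\<lambda>A. topspace T - T closure_of (A \<inter> S0)) ` \<A>"
  have cG: "countable G" using c unfolding G_def by simp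
  have dG: "\<forall>g\<in>G. openin T g \<and> T closure_of g = topspace T"
  proof
    fix g assume "g \<in> G"
    then obtain A where A: "A \<in> \<A>" and g: "g = topspace T - T closure_of (A \<inter> S0)" unfolding G_def by auto
    define I where "I = T interior_of (T closure_of (A \<inter> S0))"
    have Io: "openin T I" unfolding I_def by simp
    have "I = {}"
    proof (rule ccontr)
      assume "I \<noteq> {}"
      have "I \<subseteq> T closure_of S0" unfolding I_def
        by (meson closure_of_mono inf_le2 interior_of_subset order_trans)
      hence "I \<inter> T closure_of S0 \<noteq> {}" using \<open>I \<noteq> {}\<close> by blast
      hence "I \<inter> S0 \<noteq> {}" using openin_Int_closure_of_eq_empty[OF Io] by blast
      moreover have "I \<subseteq> T interior_of (T closure_of A)" unfolding I_def
        by (simp add: closure_of_mono interior_of_mono)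
      ultimately show False using H A by blast
    qed
    then show "openin T g \<and> T closure_of g = topspace T"
      using g closure_of_complement[of T "T closure_of (A \<inter> S0)"] unfolding I_def by auto
  qed
  have "T closure_of (topspace T \<inter> \<Inter>G) = topspace T"
    using B cG dG unfolding Baire_space_def by blast
  hence "S0 \<inter> T closure_of (topspace T \<inter> \<Inter>G) \<noteq> {}" using o openin_subset by fastforce
  hence "S0 \<inter> (topspace T \<inter> \<Inter>G) \<noteq> {}" using openin_Int_closure_of_eq_empty[OF o(1)] by blast
  then obtain x where x: "x \<in> S0" "x \<in> topspace T" "x \<in> \<Inter>G" by blast
  then obtain A where A: "A \<in> \<A>" "x \<in> A" using cov by blast
  have "x \<in> T closure_of (A \<inter> S0)" using closure_of_subset_Int[of T "A \<inter> S0"] x A by blast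
  moreover have "topspace T - T closure_of (A \<inter> S0) \<in> G" using A unfolding G_def by blast
  ultimately show False using x by blast
qed

theorem theorem4p2:
  fixes X :: "'a topology" and Y :: "'b topology"
    and f :: "'a \<times> 'b \<Rightarrow> 'c::metric_space" and D :: "'b set"
  assumes "Baire_space X"
    and "\<forall>y\<in>topspace Y. quasicontinuous X (\<lambda>x. f (x, y))"
    and "D \<subseteq> topspace Y" and "Y closure_of D = topspace Y"
    and "\<forall>y\<in>D. \<exists>Q. Q \<subseteq> topspace X \<and> X closure_of Q = topspace X \<and>
            Baire_space (subtopology X Q) \<and> (\<forall>x\<in>Q. cliquish_at Y (\<lambda>v. f (x, v)) y)"
    and "\<forall>y\<in>D. \<exists>N V \<B>. openin Y V \<and> y \<in> V \<and> V \<subseteq> N \<and> N \<subseteq> topspace Y \<and>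
            countable \<B> \<and> pseudobase (subtopology Y N) \<B>"
  shows "cliquish (prod_topology X Y) f"
  unfolding cliquish_def cliquish_at_def
proof (intro ballI allI impI)
  fix t :: "'a \<times> 'b" and e :: real and W
  assume t: "t \<in> topspace (prod_topology X Y)" and e: "e > 0"
    and W: "openin (prod_topology X Y) W \<and> t \<in> W"
  obtain x0 y0 where t0: "t = (x0, y0)" by fastforce
  obtain U0 V0 where UV: "openin X U0" "openin Y V0" "x0 \<in> U0" "y0 \<in> V0" "U0 \<times> V0 \<subseteq> W"
    using W t0 openin_prod_topology_alt[of X Y W] by metis
  have "V0 \<inter> Y closure_of D \<noteq> {}" using UV(2,4) assms(4) openin_subset[OF UV(2)] by auto
  then obtain y where y: "y \<in> D" "y \<in> V0"
    using openin_Int_closure_of_eq_empty[OF UV(2)] by blast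
  obtain Q where Q: "Q \<subseteq> topspace X" "X closure_of Q = topspace X"
      "Baire_space (subtopology X Q)" "\<forall>x\<in>Q. cliquish_at Y (\<lambda>v. f (x, v)) y"
    using bspec[OF assms(5) y(1)] by blast
  obtain N V \<B> where NV: "openin Y V" "y \<in> V" "V \<subseteq> N" "N \<subseteq> topspace Y"
      "countable \<B>" "pseudobase (subtopology Y N) \<B>"
    using bspec[OF assms(6) y(1)] by (elim exE conjE)
  define e' where "e' = e / 4"
  have e': "e' > 0" using e unfolding e'_def by simp
  define A where "A = (\<lambda>B. {x \<in> Q \<inter> U0. \<forall>u\<in>B. \<forall>v\<in>B. dist (f (x, u)) (f (x, v)) \<le> e'})"
  define \<B>' where "\<B>' = {B\<in>\<B>. openin Y B \<and> B \<noteq> {} \<and> B \<subseteq> V \<inter> V0}"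
  have QU0: "openin (subtopology X Q) (Q \<inter> U0)"
    using UV(1) openin_subtopology by blast
  have "U0 \<inter> X closure_of Q \<noteq> {}" using UV Q(2) openin_subset by fastforce
  hence QU0ne: "Q \<inter> U0 \<noteq> {}" using openin_Int_closure_of_eq_empty[OF UV(1)] by blast
  have cov: "Q \<inter> U0 \<subseteq> \<Union>(A ` \<B>')"
  proof
    fix x assume x: "x \<in> Q \<inter> U0"
    have "openin Y (V \<inter> V0) \<and> y \<in> V \<inter> V0" using NV UV y by auto
    then obtain O1 where O1: "openin Y O1" "O1 \<noteq> {}" "O1 \<subseteq> V \<inter> V0"
      "\<forall>u\<in>O1. \<forall>v\<in>O1. dist (f (x, u)) (f (x, v)) \<le> e'"
    proof -
      have "cliquish_at Y (\<lambda>v. f (x, v)) y" using Q(4) x by blast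
      from this[unfolded cliquish_at_def, rule_format, OF e'] \<open>openin Y (V \<inter> V0) \<and> y \<in> V \<inter> V0\<close>
      show ?thesis using that by blast
    qed
    have "openin (subtopology Y N) O1"
      unfolding openin_subtopology using O1 NV(3) by (intro exI[of _ O1]) auto
    then obtain B where B: "B \<in> \<B>" "B \<subseteq> O1" "openin (subtopology Y N) B" "B \<noteq> {}"
    proof -
      have "\<forall>U. openin (subtopology Y N) U \<and> U \<noteq> {} \<longrightarrow> (\<exists>B\<in>\<B>. B \<subseteq> U)"
        "\<forall>B\<in>\<B>. openin (subtopology Y N) B \<and> B \<noteq> {}"
        using NV(6) unfolding pseudobase_def by blast+
      thus ?thesis using that \<open>openin (subtopology Y N) O1\<close> O1(2) by meson
    qed
    obtain G where G: "openin Y G" "B = G \<inter> N" using B(3)[unfolded openin_subtopology] by blast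
    have "B = G \<inter> V" using G B O1 NV(3) by blast
    hence "openin Y B" using G NV(1) by auto
    hence "B \<in> \<B>'" using B O1 unfolding \<B>'_def by blast
    moreover have "x \<in> A B" using x B O1 unfolding A_def by blast
    ultimately show "x \<in> \<Union>(A ` \<B>')" by blast
  qed
  have "countable (A ` \<B>')" using NV(5) unfolding \<B>'_def by simp
  then obtain A0 where A0: "A0 \<in> A ` \<B>'" and
    ne: "subtopology X Q interior_of (subtopology X Q closure_of A0) \<inter> (Q \<inter> U0) \<noteq> {}"
    using baire_aux[OF Q(3) _ QU0 QU0ne cov] by blast
  obtain B where B: "B \<in> \<B>'" "A0 = A B" using A0 by blast
  define I where "I = subtopology X Q interior_of (subtopology X Q closure_of A0)"
  have "openin (subtopology X Q) I" unfolding I_def by simp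
  then obtain G where G: "openin X G" "I = G \<inter> Q" unfolding openin_subtopology by blast
  define G' where "G' = G \<inter> U0"
  have G'o: "openin X G'" unfolding G'_def using G UV by auto
  have G'sub: "Q \<inter> G' \<subseteq> X closure_of (A B)"
    using G closure_of_subtopology_subset[of X Q A0] B(2) interior_of_subset[of "subtopology X Q"]
    unfolding G'_def I_def by blast
  have meet: "G1 \<inter> A B \<noteq> {}" if "openin X G1" "G1 \<noteq> {}" "G1 \<subseteq> G'" for G1
  proof -
    have "G1 \<inter> X closure_of Q \<noteq> {}" using that Q(2) openin_subset by fastforce
    hence "G1 \<inter> Q \<noteq> {}" using openin_Int_closure_of_eq_empty[OF that(1)] by blast
    hence "G1 \<inter> X closure_of (A B) \<noteq> {}" using G'sub that(3) by blast
    thus ?thesis using openin_Int_closure_of_eq_empty[OF that(1)] by blast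
  qed
  have "G' \<noteq> {}" using ne G unfolding G'_def I_def by blast
  then obtain x1 where x1: "x1 \<in> G'" "x1 \<in> A B" using meet[OF G'o _ order.refl] by blast
  have Bp: "openin Y B" "B \<noteq> {}" "B \<subseteq> V \<inter> V0" using B unfolding \<B>'_def by auto
  then obtain y1 where y1: "y1 \<in> B" by blast
  have BY: "B \<subseteq> topspace Y" using Bp openin_subset by blast
  have "quasicontinuous_at X (\<lambda>x. f (x, y1)) x1"
    using assms(2) BY y1 x1 G'o openin_subset unfolding quasicontinuous_def by blast
  then obtain G1 where G1: "openin X G1" "G1 \<noteq> {}" "G1 \<subseteq> G'"
      "(\<lambda>x. f (x, y1)) ` G1 \<subseteq> ball (f (x1, y1)) e'"
  proof -
    have "\<exists>V. openin X V \<and> V \<noteq> {} \<and> V \<subseteq> G' \<and> (\<lambda>x. f (x, y1)) ` V \<subseteq> ball (f (x1, y1)) e'"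
      using \<open>quasicontinuous_at X (\<lambda>x. f (x, y1)) x1\<close>[unfolded quasicontinuous_at_def, rule_format, of G' "ball (f (x1, y1)) e'"]
        x1 G'o e' by simp
    thus ?thesis using that by blast
  qed
  have bound: "dist (f (x, v)) (f (x1, y1)) \<le> 2 * e'" if xv: "x \<in> G1" "v \<in> B" for x v
  proof (rule field_le_epsilon)
    fix \<delta> :: real assume d: "\<delta> > 0"
    have "quasicontinuous_at X (\<lambda>x. f (x, v)) x"
      using assms(2) BY xv G1(1) openin_subset unfolding quasicontinuous_def by blast
    then obtain O2 where O2: "openin X O2" "O2 \<noteq> {}" "O2 \<subseteq> G1"
        "(\<lambda>x'. f (x', v)) ` O2 \<subseteq> ball (f (x, v)) \<delta>"
    proof -
      have "\<exists>V. openin X V \<and> V \<noteq> {} \<and> V \<subseteq> G1 \<and> (\<lambda>x'. f (x', v)) ` V \<subseteq> ball (f (x, v)) \<delta>"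
        using \<open>quasicontinuous_at X (\<lambda>x. f (x, v)) x\<close>[unfolded quasicontinuous_at_def, rule_format, of G1 "ball (f (x, v)) \<delta>"]
          xv G1(1) d by simp
      thus ?thesis using that by blast
    qed
    then obtain x' where x': "x' \<in> O2" "x' \<in> A B" using meet[of O2] G1(3) by blast
    have "dist (f (x, v)) (f (x', v)) < \<delta>" using O2(4) x'(1) by (auto simp: dist_commute)
    moreover have "dist (f (x', v)) (f (x', y1)) \<le> e'" using x'(2) xv y1 unfolding A_def by blast
    moreover have "dist (f (x', y1)) (f (x1, y1)) < e'"
    proof -
      have "f (x', y1) \<in> ball (f (x1, y1)) e'" using G1(4) O2(3) x'(1) by blast
      thus ?thesis by (simp add: dist_commute)
    qed
    ultimately show "dist (f (x, v)) (f (x1, y1)) \<le> 2 * e' + \<delta>"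
      using dist_triangle[of "f (x, v)" "f (x1, y1)" "f (x', v)"]
        dist_triangle[of "f (x', v)" "f (x1, y1)" "f (x', y1)"] by linarith
  qed
  show "\<exists>V. openin (prod_topology X Y) V \<and> V \<noteq> {} \<and> V \<subseteq> W \<and>
          (\<forall>u\<in>V. \<forall>v\<in>V. dist (f u) (f v) \<le> e)"
  proof (intro exI conjI ballI)
    show "openin (prod_topology X Y) (G1 \<times> B)" using G1 Bp by (simp add: openin_prod_Times_iff)
    show "G1 \<times> B \<noteq> {}" using G1 Bp by simp
    have "G1 \<subseteq> U0" using G1(3) unfolding G'_def by blast
    thus "G1 \<times> B \<subseteq> W" using Bp UV(5) by blast
    fix u v assume u: "u \<in> G1 \<times> B" and v: "v \<in> G1 \<times> B"
    obtain a b where ab: "u = (a, b)" using prod.exhaust by blast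
    obtain c d where cd: "v = (c, d)" using prod.exhaust by blast
    have "dist (f u) (f (x1, y1)) \<le> 2 * e'" "dist (f v) (f (x1, y1)) \<le> 2 * e'"
      using bound u v ab cd by auto
    thus "dist (f u) (f v) \<le> e"
      using dist_triangle[of "f u" "f v" "f (x1, y1)"] unfolding e'_def by (simp add: dist_commute)
  qed
qed

end
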